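(* In the group \(\mathcal{G}\) described below, there exists \(\sigma\in\mathcal{N}\) such that \(t_{14}t_6t_3t_{11}=\sigma\, t_5t_3t_8t_{14}\).
   Context: Let \(\mathcal{G}=\langle x,y,t \mid x^7, y^2, (xy)^3, [x,y]^4, t^2, [t^{x^2},yx^{-1}], [t,y], (yt^{x^2})^5, (xyx^2t^x)^5, (xt)^8\rangle\), with \(a^g=g^{-1}ag\), \([a,b]=a^{-1}b^{-1}ab\). Let \(\mathcal{N}=\langle x,y\rangle\le\mathcal{G}\); it acts on \(\{1,\dots,14\}\) on the right via \(x\mapsto(1,2,3,4,5,6,7)(8,9,10,11,12,13,14)\), \(y\mapsto(1,12)(2,3)(4,11)(5,8)(6,13)(9,10)\). Put \(t_7=t\) and \(t_i=t^g\) for any \(g\in\mathcal{N}\) mapping \(7\) to \(i\) (well defined since the stabilizer of 7 centralizes \(t\)). *)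

theory Defs
  imports Main
begin

text \<open>Elements are represented by words over the generators and their inverses;
  equality in G is the congruence generated by free cancellation and the relators.\<close>

datatype gen = X | Y | T

type_synonym word = "(gen \<times> bool) list"  (* (g, True) stands for g^-1 *)

definition ltr :: "gen \<Rightarrow> word" where "ltr g = [(g, False)]"

definition winv :: "word \<Rightarrow> word" where
  "winv w = rev (map (\<lambda>(g, b). (g, \<not> b)) w)"

definition wpow :: "word \<Rightarrow> nat \<Rightarrow> word" where
  "wpow w n = concat (replicate n w)"

definition wcomm :: "word \<Rightarrow> word \<Rightarrow> word" where
  "wcomm a b = winv a @ winv b @ a @ b"

definition wconj :: "word \<Rightarrow> word \<Rightarrow> word" where
  "wconj a g = winv g @ a @ g"

definition relators :: "word set" where
  "relators = {
     wpow (ltr X) 7,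
     wpow (ltr Y) 2,
     wpow (ltr X @ ltr Y) 3,
     wpow (wcomm (ltr X) (ltr Y)) 4,
     wpow (ltr T) 2,
     wcomm (wconj (ltr T) (wpow (ltr X) 2)) (ltr Y @ winv (ltr X)),
     wcomm (ltr T) (ltr Y),
     wpow (ltr Y @ wconj (ltr T) (wpow (ltr X) 2)) 5,
     wpow (ltr X @ ltr Y @ wpow (ltr X) 2 @ wconj (ltr T) (ltr X)) 5,
     wpow (ltr X @ ltr T) 8 }"

inductive geq :: "word \<Rightarrow> word \<Rightarrow> bool" where
  geq_refl: "geq u u"
| geq_sym: "geq u v \<Longrightarrow> geq v u"
| geq_trans: "geq u v \<Longrightarrow> geq v w \<Longrightarrow> geq u w"
| geq_cancel: "geq [(g, b), (g, \<not> b)] []"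
| geq_rel: "r \<in> relators \<Longrightarrow> geq r []"
| geq_app: "geq u v \<Longrightarrow> geq u' v' \<Longrightarrow> geq (u @ u') (v @ v')"

text \<open>Action of N = <x,y> on {1..14} (on the right).\<close>
definition xperm :: "nat \<Rightarrow> nat" where
  "xperm i = (if 1 \<le> i \<and> i < 7 then i + 1 else if i = 7 then 1
              else if 8 \<le> i \<and> i < 14 then i + 1 else if i = 14 then 8 else i)"

definition xinvperm :: "nat \<Rightarrow> nat" where
  "xinvperm i = (if 1 < i \<and> i \<le> 7 then i - 1 else if i = 1 then 7
              else if 8 < i \<and> i \<le> 14 then i - 1 else if i = 8 then 14 else i)"

definition yperm :: "nat \<Rightarrow> nat" where
  "yperm i = (if i = 1 then 12 else if i = 12 then 1
         else if i = 2 then 3 else if i = 3 then 2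
         else if i = 4 then 11 else if i = 11 then 4
         else if i = 5 then 8 else if i = 8 then 5
         else if i = 6 then 13 else if i = 13 then 6
         else if i = 9 then 10 else if i = 10 then 9 else i)"

fun letter_perm :: "gen \<times> bool \<Rightarrow> nat \<Rightarrow> nat" where
  "letter_perm (X, False) i = xperm i"
| "letter_perm (X, True) i = xinvperm i"
| "letter_perm (Y, _) i = yperm i"
| "letter_perm (T, _) i = i"

definition act :: "nat \<Rightarrow> word \<Rightarrow> nat" where
  "act p w = foldl (\<lambda>q l. letter_perm l q) p w"

definition inN :: "word \<Rightarrow> bool" where
  "inN w \<longleftrightarrow> (\<forall>l \<in> set w. fst l \<in> {X, Y})"

definition tw :: "nat \<Rightarrow> word" where
  "tw i = wconj (ltr T) (SOME g. inN g \<and> act 7 g = i)"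

end

theory Submission
  imports Defs
begin

abbreviation "xL \<equiv> (X, False)"
abbreviation "xI \<equiv> (X, True)"
abbreviation "yL \<equiv> (Y, False)"
abbreviation "yI \<equiv> (Y, True)"
abbreviation "tL \<equiv> (T, False)"
abbreviation "R14 \<equiv> {1,2,3,4,5,6,7,8,9,10,11,12,13,14::nat}"

declare geq_trans[trans]


lemma geq_left: "geq u v \<Longrightarrow> geq (a @ u) (a @ v)"
  by (rule geq_app[OF geq_refl])
lemma geq_right: "geq u v \<Longrightarrow> geq (u @ b) (v @ b)"
  by (rule geq_app[OF _ geq_refl])
lemma geq_mid: "geq u v \<Longrightarrow> geq (a @ u @ b) (a @ v @ b)"
  by (intro geq_left geq_right)

lemma winv_Nil[simp]: "winv [] = []" by (simp add: winv_def)
lemma winv_append[simp]: "winv (a @ b) = winv b @ winv a" by (simp add: winv_def)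
lemma winv_Cons: "winv ((g,b) # w) = winv w @ [(g, \<not> b)]" by (simp add: winv_def)
lemma winv_winv[simp]: "winv (winv w) = w"
  by (induction w) (auto simp: winv_def)

lemma cancel_r: "geq (w @ winv w) []"
proof (induction w)
  case Nil then show ?case by (simp add: geq_refl)
next
  case (Cons a w)
  obtain g b where a: "a = (g,b)" by (cases a)
  have "a # w @ winv (a # w) = [(g,b)] @ (w @ winv w) @ [(g, \<not> b)]"
    by (simp add: a winv_Cons)
  also have "geq ... ([(g,b)] @ [] @ [(g, \<not> b)])" by (rule geq_mid[OF Cons.IH])
  also have "... = [(g,b),(g,\<not>b)]" by simp
  also have "geq ... []" by (rule geq_cancel)
  finally show ?case by simp
qed

lemma cancel_l: "geq (winv w @ w) []"
  using cancel_r[of "winv w"] by simp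

definition cent :: "word \<Rightarrow> bool" where "cent s \<longleftrightarrow> geq (s @ [tL]) ([tL] @ s)"

lemma cent_geq: assumes "geq a b" "cent a" shows "cent b"
proof -
  have "geq (b @ [tL]) (a @ [tL])" by (rule geq_right[OF geq_sym[OF assms(1)]])
  also have "geq ... ([tL] @ a)" using assms(2) by (simp add: cent_def)
  also have "geq ... ([tL] @ b)" by (rule geq_left[OF assms(1)])
  finally show ?thesis by (simp add: cent_def)
qed

lemma cent_nil: "cent []" by (simp add: cent_def geq_refl)

lemma cent_one: "geq a [] \<Longrightarrow> cent a"
  by (rule cent_geq[OF geq_sym cent_nil])

lemma cent_app: assumes "cent a" "cent b" shows "cent (a @ b)"
proof -
  have "(a @ b) @ [tL] = a @ (b @ [tL])" by simp
  also have "geq ... (a @ ([tL] @ b))" using assms(2) unfolding cent_def by (rule geq_left)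
  also have "... = (a @ [tL]) @ b" by simp
  also have "geq ... (([tL] @ a) @ b)" using assms(1) unfolding cent_def by (rule geq_right)
  also have "... = [tL] @ (a @ b)" by simp
  finally show ?thesis unfolding cent_def .
qed

lemma cent_winv: assumes "cent a" shows "cent (winv a)"
proof -
  have "winv a @ [tL] = (winv a @ [tL]) @ []" by simp
  also have "geq ... ((winv a @ [tL]) @ (a @ winv a))" by (rule geq_left[OF geq_sym[OF cancel_r]])
  also have "... = winv a @ ([tL] @ a) @ winv a" by simp
  also have "geq ... (winv a @ (a @ [tL]) @ winv a)"
    by (rule geq_mid, rule geq_sym, rule assms[unfolded cent_def])
  also have "... = (winv a @ a) @ [tL] @ winv a" by simp
  also have "geq ... ([] @ [tL] @ winv a)" by (rule geq_right[OF cancel_l])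
  finally show ?thesis unfolding cent_def by simp
qed

lemma cent_mid: assumes "cent A" "cent B" "cent (A @ e @ B)" shows "cent e"
proof -
  have "winv A @ (A @ e @ B) @ winv B = (winv A @ A) @ (e @ B @ winv B)" by simp
  also have "geq ... ([] @ (e @ B @ winv B))" by (rule geq_right[OF cancel_l])
  also have "... = e @ (B @ winv B)" by simp
  also have "geq ... (e @ [])" by (rule geq_left[OF cancel_r])
  finally have g: "geq (winv A @ (A @ e @ B) @ winv B) e" by simp
  show ?thesis
    by (rule cent_geq[OF g]) (intro cent_app cent_winv assms)
qed

lemma cent_concat: "\<forall>x\<in>set xs. cent x \<Longrightarrow> cent (concat xs)"
  by (induction xs) (auto intro: cent_app cent_nil)

lemma comm_rel: assumes "geq (winv a @ winv b @ a @ b) []" shows "geq (b @ a) (a @ b)"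
proof -
  have "b @ a = (b @ a) @ []" by simp
  also have "geq ... ((b @ a) @ (winv a @ winv b @ a @ b))" by (rule geq_left[OF geq_sym[OF assms]])
  also have "... = b @ (a @ winv a) @ (winv b @ a @ b)" by simp
  also have "geq ... (b @ [] @ (winv b @ a @ b))" by (rule geq_mid[OF cancel_r])
  also have "... = (b @ winv b) @ (a @ b)" by simp
  also have "geq ... ([] @ (a @ b))" by (rule geq_right[OF cancel_r])
  finally show ?thesis by simp
qed

lemma act_Nil[simp]: "act j [] = j" by (simp add: act_def)
lemma act_Cons[simp]: "act j (l # w) = act (letter_perm l j) w" by (simp add: act_def)
lemma act_append[simp]: "act j (u @ w) = act (act j u) w" by (simp add: act_def)

lemma inN_Nil[simp]: "inN []" by (simp add: inN_def)
lemma inN_append[simp]: "inN (a @ b) \<longleftrightarrow> inN a \<and> inN b" by (auto simp: inN_def)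
lemma inN_winv[simp]: "inN (winv w) \<longleftrightarrow> inN w" by (auto simp: inN_def winv_def)
lemma inN_Cons[simp]: "inN (l # b) \<longleftrightarrow> fst l \<in> {X,Y} \<and> inN b" by (auto simp: inN_def)



definition hl :: "word list" where "hl = [[], [xL], [xL, xL], [xL, xL, xL], [xL, yL, xI, yL], [xI, xI], [xI], [], [xL, yL, xI, xI, yL, xI], [xL, yL, xI, xI, yL], [xL, yL, xI, xI], [xL, yL, xI], [xL, yL], [xL, yL, xL], [xL, yL, xL, xL]]"
definition h :: "nat \<Rightarrow> word" where "h j = hl ! j"
lemma pvals[simp]:
  "xperm 1 = 2"
  "xperm 2 = 3"
  "xperm 3 = 4"
  "xperm 4 = 5"
  "xperm 5 = 6"
  "xperm 6 = 7"
  "xperm 7 = 1"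
  "xperm 8 = 9"
  "xperm 9 = 10"
  "xperm 10 = 11"
  "xperm 11 = 12"
  "xperm 12 = 13"
  "xperm 13 = 14"
  "xperm 14 = 8"
  "xperm (Suc 0) = 2"
  "xinvperm 1 = 7"
  "xinvperm 2 = 1"
  "xinvperm 3 = 2"
  "xinvperm 4 = 3"
  "xinvperm 5 = 4"
  "xinvperm 6 = 5"
  "xinvperm 7 = 6"
  "xinvperm 8 = 14"
  "xinvperm 9 = 8"
  "xinvperm 10 = 9"
  "xinvperm 11 = 10"
  "xinvperm 12 = 11"
  "xinvperm 13 = 12"
  "xinvperm 14 = 13"
  "xinvperm (Suc 0) = 7"
  "yperm 1 = 12"
  "yperm 2 = 3"
  "yperm 3 = 2"
  "yperm 4 = 11"
  "yperm 5 = 8"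
  "yperm 6 = 13"
  "yperm 7 = 7"
  "yperm 8 = 5"
  "yperm 9 = 10"
  "yperm 10 = 9"
  "yperm 11 = 4"
  "yperm 12 = 1"
  "yperm 13 = 6"
  "yperm 14 = 14"
  "yperm (Suc 0) = 12"
  by (simp_all add: xperm_def xinvperm_def yperm_def)
lemma lp_range: assumes "j \<in> R14" "fst l \<in> {X,Y}" shows "letter_perm l j \<in> R14"
proof -
  obtain g b where l: "l = (g,b)" by (cases l)
  have g: "g = X \<or> g = Y" using assms(2) l by simp
  have j: "j = 1 \<or> j = 2 \<or> j = 3 \<or> j = 4 \<or> j = 5 \<or> j = 6 \<or> j = 7 \<or> j = 8 \<or> j = 9 \<or> j = 10 \<or> j = 11 \<or> j = 12 \<or> j = 13 \<or> j = 14"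
    using assms(1) by simp
  show ?thesis unfolding l using g j
    by (elim disjE; cases b; simp only: letter_perm.simps pvals; simp)
qed

lemma act_range: "inN w \<Longrightarrow> j \<in> R14 \<Longrightarrow> act j w \<in> R14"
proof (induction w arbitrary: j)
  case Nil then show ?case by simp
next
  case (Cons l w)
  have "fst l \<in> {X,Y}" "inN w" using Cons.prems(1) by simp_all
  then show ?case using Cons.IH lp_range Cons.prems(2) by simp
qed

definition ew :: "nat \<times> (gen \<times> bool) \<Rightarrow> word" where
  "ew e = h (fst e) @ [snd e] @ winv (h (letter_perm (snd e) (fst e)))"

fun edges :: "nat \<Rightarrow> word \<Rightarrow> (nat \<times> (gen \<times> bool)) list" where
  "edges j [] = []"
| "edges j (l # ls) = (j, l) # edges (letter_perm l j) ls"

lemma epath: "geq (concat (map ew (edges j w))) (h j @ w @ winv (h (act j w)))"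
proof (induction w arbitrary: j)
  case Nil
  show ?case using geq_sym[OF cancel_r[of "h j"]] by simp
next
  case (Cons l ls)
  let ?j = "letter_perm l j"
  have "concat (map ew (edges j (l # ls))) = (h j @ [l] @ winv (h ?j)) @ concat (map ew (edges ?j ls))"
    by (simp add: ew_def)
  also have "geq ... ((h j @ [l] @ winv (h ?j)) @ (h ?j @ ls @ winv (h (act ?j ls))))"
    by (rule geq_left[OF Cons.IH])
  also have "... = (h j @ [l]) @ (winv (h ?j) @ h ?j) @ (ls @ winv (h (act ?j ls)))" by simp
  also have "geq ... ((h j @ [l]) @ [] @ (ls @ winv (h (act ?j ls))))" by (rule geq_mid[OF cancel_l])
  finally show ?case by simp
qed

lemma loop:
  assumes c: "cent (h j @ w @ winv (h j))" and a: "act j w = j"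
    and k: "k < length (edges j w)"
    and others: "\<forall>e\<in>set (take k (edges j w) @ drop (Suc k) (edges j w)). cent (ew e)"
  shows "cent (ew (edges j w ! k))"
proof -
  let ?E = "edges j w"
  have whole: "cent (concat (map ew ?E))"
    using cent_geq[OF geq_sym[OF epath[of j w]]] c a by simp
  have "?E = take k ?E @ ?E ! k # drop (Suc k) ?E" by (rule id_take_nth_drop[OF k])
  then have split: "concat (map ew ?E) = concat (map ew (take k ?E)) @ ew (?E ! k) @ concat (map ew (drop (Suc k) ?E))"
    by (metis append_Cons concat.simps(2) concat_append list.simps(9) map_append)
  have c1: "cent (concat (map ew (take k ?E)))" by (rule cent_concat) (use others in auto)
  have c2: "cent (concat (map ew (drop (Suc k) ?E)))" by (rule cent_concat) (use others in auto)
  show ?thesis by (rule cent_mid[OF c1 c2]) (use whole split in simp)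
qed

lemma rel_cent: assumes "geq w []" shows "cent (h j @ w @ winv (h j))"
proof (rule cent_one)
  have "geq (h j @ w @ winv (h j)) (h j @ [] @ winv (h j))" by (rule geq_mid[OF assms])
  also have "geq (h j @ [] @ winv (h j)) []" using cancel_r[of "h j"] by simp
  finally show "geq (h j @ w @ winv (h j)) []" .
qed

lemma tree_cent: assumes "h (letter_perm l j) = h j @ [l]" shows "cent (ew (j,l))"
proof -
  have "ew (j,l) = (h j @ [l]) @ winv (h j @ [l])" using assms by (simp add: ew_def del: winv_append)
  then show ?thesis using cancel_r[of "h j @ [l]"] by (metis cent_one)
qed

lemma conj_cent2: assumes "geq (b @ wconj [tL] g) (wconj [tL] g @ b)" shows "cent (g @ b @ winv g)"
proof -
  have "(g @ b @ winv g) @ [tL] = (g @ b @ winv g @ [tL]) @ []" by simp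
  also have "geq ... ((g @ b @ winv g @ [tL]) @ (g @ winv g))" by (rule geq_left[OF geq_sym[OF cancel_r]])
  also have "... = g @ (b @ wconj [tL] g) @ winv g" by (simp add: wconj_def)
  also have "geq ... (g @ (wconj [tL] g @ b) @ winv g)" by (rule geq_mid[OF assms])
  also have "... = (g @ winv g) @ ([tL] @ g @ b @ winv g)" by (simp add: wconj_def)
  also have "geq ... ([] @ ([tL] @ g @ b @ winv g))" by (rule geq_right[OF cancel_r])
  finally show ?thesis unfolding cent_def by simp
qed

lemma c_x7: "cent (h j @ [xL,xL,xL,xL,xL,xL,xL] @ winv (h j))"
  by (rule rel_cent, rule geq_rel) (simp add: relators_def wpow_def ltr_def numeral_eq_Suc)
lemma c_y2: "cent (h j @ [yL,yL] @ winv (h j))"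
  by (rule rel_cent, rule geq_rel) (simp add: relators_def wpow_def ltr_def numeral_eq_Suc)
lemma c_xy3: "cent (h j @ [xL,yL,xL,yL,xL,yL] @ winv (h j))"
  by (rule rel_cent, rule geq_rel) (simp add: relators_def wpow_def ltr_def numeral_eq_Suc)
lemma c_comm4: "cent (h j @ [xI,yI,xL,yL,xI,yI,xL,yL,xI,yI,xL,yL,xI,yI,xL,yL] @ winv (h j))"
  by (rule rel_cent, rule geq_rel) (simp add: relators_def wpow_def ltr_def numeral_eq_Suc wcomm_def winv_def)
lemma c_xX: "cent (h j @ [xL,xI] @ winv (h j))"
  by (rule rel_cent) (use geq_cancel[of X False] in simp)
lemma c_Xx: "cent (h j @ [xI,xL] @ winv (h j))"
  by (rule rel_cent) (use geq_cancel[of X True] in simp)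
lemma c_yY: "cent (h j @ [yL,yI] @ winv (h j))"
  by (rule rel_cent) (use geq_cancel[of Y False] in simp)
lemma c_Yy: "cent (h j @ [yI,yL] @ winv (h j))"
  by (rule rel_cent) (use geq_cancel[of Y True] in simp)

lemma c_ysp: "cent (h 7 @ [yL] @ winv (h 7))"
proof -
  have "geq (winv [tL] @ winv [yL] @ [tL] @ [yL]) []"
    by (rule geq_rel) (simp add: relators_def wcomm_def ltr_def winv_def)
  then have "geq ([yL] @ [tL]) ([tL] @ [yL])" by (rule comm_rel)
  then show ?thesis by (simp add: h_def hl_def cent_def)
qed

lemma c_zsp: "cent (h 7 @ [xL,xL,yL,xI,xI,xI] @ winv (h 7))"
proof -
  have "geq (winv (wconj [tL] [xL,xL]) @ winv [yL,xI] @ (wconj [tL] [xL,xL]) @ [yL,xI]) []"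
    by (rule geq_rel) (simp add: relators_def wcomm_def ltr_def winv_def wpow_def numeral_eq_Suc)
  then have "geq ([yL,xI] @ wconj [tL] [xL,xL]) (wconj [tL] [xL,xL] @ [yL,xI])" by (rule comm_rel)
  then have "cent ([xL,xL] @ [yL,xI] @ winv [xL,xL])" by (rule conj_cent2)
  then show ?thesis by (simp add: h_def hl_def winv_def)
qed

lemma e_1_x: "cent (ew (Suc 0, xL))" by (rule tree_cent) (simp add: h_def hl_def)
lemma e_1_y: "cent (ew (Suc 0, yL))" by (rule tree_cent) (simp add: h_def hl_def)
lemma e_2_x: "cent (ew (2, xL))" by (rule tree_cent) (simp add: h_def hl_def)
lemma e_6_X: "cent (ew (6, xI))" by (rule tree_cent) (simp add: h_def hl_def)
lemma e_7_x: "cent (ew (7, xL))" by (rule tree_cent) (simp add: h_def hl_def)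
lemma e_7_X: "cent (ew (7, xI))" by (rule tree_cent) (simp add: h_def hl_def)
lemma e_9_X: "cent (ew (9, xI))" by (rule tree_cent) (simp add: h_def hl_def)
lemma e_10_y: "cent (ew (10, yL))" by (rule tree_cent) (simp add: h_def hl_def)
lemma e_11_X: "cent (ew (11, xI))" by (rule tree_cent) (simp add: h_def hl_def)
lemma e_11_y: "cent (ew (11, yL))" by (rule tree_cent) (simp add: h_def hl_def)
lemma e_12_x: "cent (ew (12, xL))" by (rule tree_cent) (simp add: h_def hl_def)
lemma e_12_X: "cent (ew (12, xI))" by (rule tree_cent) (simp add: h_def hl_def)
lemma e_13_x: "cent (ew (13, xL))" by (rule tree_cent) (simp add: h_def hl_def)
lemma e_12_y: "cent (ew (12, yL))"
  using loop[OF c_y2[of 1], of 1] by (simp add: e_1_x e_1_y e_2_x e_6_X e_7_x e_7_X e_9_X e_10_y e_11_X e_11_y e_12_x e_12_X e_13_x One_nat_def)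
lemma e_2_X: "cent (ew (2, xI))"
  using loop[OF c_xX[of 1], of 1] by (simp add: e_1_x e_1_y e_2_x e_6_X e_7_x e_7_X e_9_X e_10_y e_11_X e_11_y e_12_x e_12_X e_13_x e_12_y One_nat_def)
lemma e_1_X: "cent (ew (Suc 0, xI))"
  using loop[OF c_Xx[of 1], of 0] by (simp add: e_1_x e_1_y e_2_x e_6_X e_7_x e_7_X e_9_X e_10_y e_11_X e_11_y e_12_x e_12_X e_13_x e_12_y e_2_X One_nat_def)
lemma e_12_Y: "cent (ew (12, yI))"
  using loop[OF c_yY[of 1], of 1] by (simp add: e_1_x e_1_y e_2_x e_6_X e_7_x e_7_X e_9_X e_10_y e_11_X e_11_y e_12_x e_12_X e_13_x e_12_y e_2_X e_1_X One_nat_def)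
lemma e_1_Y: "cent (ew (Suc 0, yI))"
  using loop[OF c_Yy[of 1], of 0] by (simp add: e_1_x e_1_y e_2_x e_6_X e_7_x e_7_X e_9_X e_10_y e_11_X e_11_y e_12_x e_12_X e_13_x e_12_y e_2_X e_1_X e_12_Y One_nat_def)
lemma e_3_X: "cent (ew (3, xI))"
  using loop[OF c_xX[of 2], of 1] by (simp add: e_1_x e_1_y e_2_x e_6_X e_7_x e_7_X e_9_X e_10_y e_11_X e_11_y e_12_x e_12_X e_13_x e_12_y e_2_X e_1_X e_12_Y e_1_Y One_nat_def)
lemma e_4_y: "cent (ew (4, yL))"
  using loop[OF c_y2[of 4], of 0] by (simp add: e_1_x e_1_y e_2_x e_6_X e_7_x e_7_X e_9_X e_10_y e_11_X e_11_y e_12_x e_12_X e_13_x e_12_y e_2_X e_1_X e_12_Y e_1_Y e_3_X One_nat_def)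
lemma e_11_Y: "cent (ew (11, yI))"
  using loop[OF c_yY[of 4], of 1] by (simp add: e_1_x e_1_y e_2_x e_6_X e_7_x e_7_X e_9_X e_10_y e_11_X e_11_y e_12_x e_12_X e_13_x e_12_y e_2_X e_1_X e_12_Y e_1_Y e_3_X e_4_y One_nat_def)
lemma e_4_Y: "cent (ew (4, yI))"
  using loop[OF c_Yy[of 4], of 0] by (simp add: e_1_x e_1_y e_2_x e_6_X e_7_x e_7_X e_9_X e_10_y e_11_X e_11_y e_12_x e_12_X e_13_x e_12_y e_2_X e_1_X e_12_Y e_1_Y e_3_X e_4_y e_11_Y One_nat_def)
lemma e_5_x: "cent (ew (5, xL))"
  using loop[OF c_xX[of 5], of 0] by (simp add: e_1_x e_1_y e_2_x e_6_X e_7_x e_7_X e_9_X e_10_y e_11_X e_11_y e_12_x e_12_X e_13_x e_12_y e_2_X e_1_X e_12_Y e_1_Y e_3_X e_4_y e_11_Y e_4_Y One_nat_def)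
lemma e_6_x: "cent (ew (6, xL))"
  using loop[OF c_xX[of 6], of 0] by (simp add: e_1_x e_1_y e_2_x e_6_X e_7_x e_7_X e_9_X e_10_y e_11_X e_11_y e_12_x e_12_X e_13_x e_12_y e_2_X e_1_X e_12_Y e_1_Y e_3_X e_4_y e_11_Y e_4_Y e_5_x One_nat_def)
lemma e_8_x: "cent (ew (8, xL))"
  using loop[OF c_xX[of 8], of 0] by (simp add: e_1_x e_1_y e_2_x e_6_X e_7_x e_7_X e_9_X e_10_y e_11_X e_11_y e_12_x e_12_X e_13_x e_12_y e_2_X e_1_X e_12_Y e_1_Y e_3_X e_4_y e_11_Y e_4_Y e_5_x e_6_x One_nat_def)
lemma e_9_y: "cent (ew (9, yL))"
  using loop[OF c_y2[of 9], of 0] by (simp add: e_1_x e_1_y e_2_x e_6_X e_7_x e_7_X e_9_X e_10_y e_11_X e_11_y e_12_x e_12_X e_13_x e_12_y e_2_X e_1_X e_12_Y e_1_Y e_3_X e_4_y e_11_Y e_4_Y e_5_x e_6_x e_8_x One_nat_def)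
lemma e_10_Y: "cent (ew (10, yI))"
  using loop[OF c_yY[of 9], of 1] by (simp add: e_1_x e_1_y e_2_x e_6_X e_7_x e_7_X e_9_X e_10_y e_11_X e_11_y e_12_x e_12_X e_13_x e_12_y e_2_X e_1_X e_12_Y e_1_Y e_3_X e_4_y e_11_Y e_4_Y e_5_x e_6_x e_8_x e_9_y One_nat_def)
lemma e_9_Y: "cent (ew (9, yI))"
  using loop[OF c_Yy[of 9], of 0] by (simp add: e_1_x e_1_y e_2_x e_6_X e_7_x e_7_X e_9_X e_10_y e_11_X e_11_y e_12_x e_12_X e_13_x e_12_y e_2_X e_1_X e_12_Y e_1_Y e_3_X e_4_y e_11_Y e_4_Y e_5_x e_6_x e_8_x e_9_y e_10_Y One_nat_def)
lemma e_10_x: "cent (ew (10, xL))"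
  using loop[OF c_xX[of 10], of 0] by (simp add: e_1_x e_1_y e_2_x e_6_X e_7_x e_7_X e_9_X e_10_y e_11_X e_11_y e_12_x e_12_X e_13_x e_12_y e_2_X e_1_X e_12_Y e_1_Y e_3_X e_4_y e_11_Y e_4_Y e_5_x e_6_x e_8_x e_9_y e_10_Y e_9_Y One_nat_def)
lemma e_11_x: "cent (ew (11, xL))"
  using loop[OF c_xX[of 11], of 0] by (simp add: e_1_x e_1_y e_2_x e_6_X e_7_x e_7_X e_9_X e_10_y e_11_X e_11_y e_12_x e_12_X e_13_x e_12_y e_2_X e_1_X e_12_Y e_1_Y e_3_X e_4_y e_11_Y e_4_Y e_5_x e_6_x e_8_x e_9_y e_10_Y e_9_Y e_10_x One_nat_def)
lemma e_13_X: "cent (ew (13, xI))"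
  using loop[OF c_xX[of 12], of 1] by (simp add: e_1_x e_1_y e_2_x e_6_X e_7_x e_7_X e_9_X e_10_y e_11_X e_11_y e_12_x e_12_X e_13_x e_12_y e_2_X e_1_X e_12_Y e_1_Y e_3_X e_4_y e_11_Y e_4_Y e_5_x e_6_x e_8_x e_9_y e_10_Y e_9_Y e_10_x e_11_x One_nat_def)
lemma e_14_X: "cent (ew (14, xI))"
  using loop[OF c_xX[of 13], of 1] by (simp add: e_1_x e_1_y e_2_x e_6_X e_7_x e_7_X e_9_X e_10_y e_11_X e_11_y e_12_x e_12_X e_13_x e_12_y e_2_X e_1_X e_12_Y e_1_Y e_3_X e_4_y e_11_Y e_4_Y e_5_x e_6_x e_8_x e_9_y e_10_Y e_9_Y e_10_x e_11_x e_13_X One_nat_def)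
lemma e_7_y: "cent (ew (7, yL))"
  using loop[OF c_ysp, of 0] by (simp add: e_1_x e_1_y e_2_x e_6_X e_7_x e_7_X e_9_X e_10_y e_11_X e_11_y e_12_x e_12_X e_13_x e_12_y e_2_X e_1_X e_12_Y e_1_Y e_3_X e_4_y e_11_Y e_4_Y e_5_x e_6_x e_8_x e_9_y e_10_Y e_9_Y e_10_x e_11_x e_13_X e_14_X One_nat_def)
lemma e_2_y: "cent (ew (2, yL))"
  using loop[OF c_zsp, of 2] by (simp add: e_1_x e_1_y e_2_x e_6_X e_7_x e_7_X e_9_X e_10_y e_11_X e_11_y e_12_x e_12_X e_13_x e_12_y e_2_X e_1_X e_12_Y e_1_Y e_3_X e_4_y e_11_Y e_4_Y e_5_x e_6_x e_8_x e_9_y e_10_Y e_9_Y e_10_x e_11_x e_13_X e_14_X e_7_y One_nat_def)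
lemma e_3_x: "cent (ew (3, xL))"
  using loop[OF c_xy3[of 1], of 2] by (simp add: e_1_x e_1_y e_2_x e_6_X e_7_x e_7_X e_9_X e_10_y e_11_X e_11_y e_12_x e_12_X e_13_x e_12_y e_2_X e_1_X e_12_Y e_1_Y e_3_X e_4_y e_11_Y e_4_Y e_5_x e_6_x e_8_x e_9_y e_10_Y e_9_Y e_10_x e_11_x e_13_X e_14_X e_7_y e_2_y One_nat_def)
lemma e_4_x: "cent (ew (4, xL))"
  using loop[OF c_x7[of 2], of 2] by (simp add: e_1_x e_1_y e_2_x e_6_X e_7_x e_7_X e_9_X e_10_y e_11_X e_11_y e_12_x e_12_X e_13_x e_12_y e_2_X e_1_X e_12_Y e_1_Y e_3_X e_4_y e_11_Y e_4_Y e_5_x e_6_x e_8_x e_9_y e_10_Y e_9_Y e_10_x e_11_x e_13_X e_14_X e_7_y e_2_y e_3_x One_nat_def)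
lemma e_3_y: "cent (ew (3, yL))"
  using loop[OF c_y2[of 2], of 1] by (simp add: e_1_x e_1_y e_2_x e_6_X e_7_x e_7_X e_9_X e_10_y e_11_X e_11_y e_12_x e_12_X e_13_x e_12_y e_2_X e_1_X e_12_Y e_1_Y e_3_X e_4_y e_11_Y e_4_Y e_5_x e_6_x e_8_x e_9_y e_10_Y e_9_Y e_10_x e_11_x e_13_X e_14_X e_7_y e_2_y e_3_x e_4_x One_nat_def)
lemma e_3_Y: "cent (ew (3, yI))"
  using loop[OF c_yY[of 2], of 1] by (simp add: e_1_x e_1_y e_2_x e_6_X e_7_x e_7_X e_9_X e_10_y e_11_X e_11_y e_12_x e_12_X e_13_x e_12_y e_2_X e_1_X e_12_Y e_1_Y e_3_X e_4_y e_11_Y e_4_Y e_5_x e_6_x e_8_x e_9_y e_10_Y e_9_Y e_10_x e_11_x e_13_X e_14_X e_7_y e_2_y e_3_x e_4_x e_3_y One_nat_def)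
lemma e_2_Y: "cent (ew (2, yI))"
  using loop[OF c_Yy[of 2], of 0] by (simp add: e_1_x e_1_y e_2_x e_6_X e_7_x e_7_X e_9_X e_10_y e_11_X e_11_y e_12_x e_12_X e_13_x e_12_y e_2_X e_1_X e_12_Y e_1_Y e_3_X e_4_y e_11_Y e_4_Y e_5_x e_6_x e_8_x e_9_y e_10_Y e_9_Y e_10_x e_11_x e_13_X e_14_X e_7_y e_2_y e_3_x e_4_x e_3_y e_3_Y One_nat_def)
lemma e_4_X: "cent (ew (4, xI))"
  using loop[OF c_xX[of 3], of 1] by (simp add: e_1_x e_1_y e_2_x e_6_X e_7_x e_7_X e_9_X e_10_y e_11_X e_11_y e_12_x e_12_X e_13_x e_12_y e_2_X e_1_X e_12_Y e_1_Y e_3_X e_4_y e_11_Y e_4_Y e_5_x e_6_x e_8_x e_9_y e_10_Y e_9_Y e_10_x e_11_x e_13_X e_14_X e_7_y e_2_y e_3_x e_4_x e_3_y e_3_Y e_2_Y One_nat_def)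
lemma e_5_y: "cent (ew (5, yL))"
  using loop[OF c_xy3[of 4], of 1] by (simp add: e_1_x e_1_y e_2_x e_6_X e_7_x e_7_X e_9_X e_10_y e_11_X e_11_y e_12_x e_12_X e_13_x e_12_y e_2_X e_1_X e_12_Y e_1_Y e_3_X e_4_y e_11_Y e_4_Y e_5_x e_6_x e_8_x e_9_y e_10_Y e_9_Y e_10_x e_11_x e_13_X e_14_X e_7_y e_2_y e_3_x e_4_x e_3_y e_3_Y e_2_Y e_4_X One_nat_def)
lemma e_5_X: "cent (ew (5, xI))"
  using loop[OF c_xX[of 4], of 1] by (simp add: e_1_x e_1_y e_2_x e_6_X e_7_x e_7_X e_9_X e_10_y e_11_X e_11_y e_12_x e_12_X e_13_x e_12_y e_2_X e_1_X e_12_Y e_1_Y e_3_X e_4_y e_11_Y e_4_Y e_5_x e_6_x e_8_x e_9_y e_10_Y e_9_Y e_10_x e_11_x e_13_X e_14_X e_7_y e_2_y e_3_x e_4_x e_3_y e_3_Y e_2_Y e_4_X e_5_y One_nat_def)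
lemma e_8_y: "cent (ew (8, yL))"
  using loop[OF c_y2[of 5], of 1] by (simp add: e_1_x e_1_y e_2_x e_6_X e_7_x e_7_X e_9_X e_10_y e_11_X e_11_y e_12_x e_12_X e_13_x e_12_y e_2_X e_1_X e_12_Y e_1_Y e_3_X e_4_y e_11_Y e_4_Y e_5_x e_6_x e_8_x e_9_y e_10_Y e_9_Y e_10_x e_11_x e_13_X e_14_X e_7_y e_2_y e_3_x e_4_x e_3_y e_3_Y e_2_Y e_4_X e_5_y e_5_X One_nat_def)
lemma e_8_Y: "cent (ew (8, yI))"
  using loop[OF c_yY[of 5], of 1] by (simp add: e_1_x e_1_y e_2_x e_6_X e_7_x e_7_X e_9_X e_10_y e_11_X e_11_y e_12_x e_12_X e_13_x e_12_y e_2_X e_1_X e_12_Y e_1_Y e_3_X e_4_y e_11_Y e_4_Y e_5_x e_6_x e_8_x e_9_y e_10_Y e_9_Y e_10_x e_11_x e_13_X e_14_X e_7_y e_2_y e_3_x e_4_x e_3_y e_3_Y e_2_Y e_4_X e_5_y e_5_X e_8_y One_nat_def)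
lemma e_5_Y: "cent (ew (5, yI))"
  using loop[OF c_Yy[of 5], of 0] by (simp add: e_1_x e_1_y e_2_x e_6_X e_7_x e_7_X e_9_X e_10_y e_11_X e_11_y e_12_x e_12_X e_13_x e_12_y e_2_X e_1_X e_12_Y e_1_Y e_3_X e_4_y e_11_Y e_4_Y e_5_x e_6_x e_8_x e_9_y e_10_Y e_9_Y e_10_x e_11_x e_13_X e_14_X e_7_y e_2_y e_3_x e_4_x e_3_y e_3_Y e_2_Y e_4_X e_5_y e_5_X e_8_y e_8_Y One_nat_def)
lemma e_13_y: "cent (ew (13, yL))"
  using loop[OF c_xy3[of 6], of 5] by (simp add: e_1_x e_1_y e_2_x e_6_X e_7_x e_7_X e_9_X e_10_y e_11_X e_11_y e_12_x e_12_X e_13_x e_12_y e_2_X e_1_X e_12_Y e_1_Y e_3_X e_4_y e_11_Y e_4_Y e_5_x e_6_x e_8_x e_9_y e_10_Y e_9_Y e_10_x e_11_x e_13_X e_14_X e_7_y e_2_y e_3_x e_4_x e_3_y e_3_Y e_2_Y e_4_X e_5_y e_5_X e_8_y e_8_Y e_5_Y One_nat_def)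
lemma e_10_X: "cent (ew (10, xI))"
  using loop[OF c_comm4[of 6], of 4] by (simp add: e_1_x e_1_y e_2_x e_6_X e_7_x e_7_X e_9_X e_10_y e_11_X e_11_y e_12_x e_12_X e_13_x e_12_y e_2_X e_1_X e_12_Y e_1_Y e_3_X e_4_y e_11_Y e_4_Y e_5_x e_6_x e_8_x e_9_y e_10_Y e_9_Y e_10_x e_11_x e_13_X e_14_X e_7_y e_2_y e_3_x e_4_x e_3_y e_3_Y e_2_Y e_4_X e_5_y e_5_X e_8_y e_8_Y e_5_Y e_13_y One_nat_def)
lemma e_6_Y: "cent (ew (6, yI))"
  using loop[OF c_Yy[of 6], of 0] by (simp add: e_1_x e_1_y e_2_x e_6_X e_7_x e_7_X e_9_X e_10_y e_11_X e_11_y e_12_x e_12_X e_13_x e_12_y e_2_X e_1_X e_12_Y e_1_Y e_3_X e_4_y e_11_Y e_4_Y e_5_x e_6_x e_8_x e_9_y e_10_Y e_9_Y e_10_x e_11_x e_13_X e_14_X e_7_y e_2_y e_3_x e_4_x e_3_y e_3_Y e_2_Y e_4_X e_5_y e_5_X e_8_y e_8_Y e_5_Y e_13_y e_10_X One_nat_def)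
lemma e_7_Y: "cent (ew (7, yI))"
  using loop[OF c_yY[of 7], of 1] by (simp add: e_1_x e_1_y e_2_x e_6_X e_7_x e_7_X e_9_X e_10_y e_11_X e_11_y e_12_x e_12_X e_13_x e_12_y e_2_X e_1_X e_12_Y e_1_Y e_3_X e_4_y e_11_Y e_4_Y e_5_x e_6_x e_8_x e_9_y e_10_Y e_9_Y e_10_x e_11_x e_13_X e_14_X e_7_y e_2_y e_3_x e_4_x e_3_y e_3_Y e_2_Y e_4_X e_5_y e_5_X e_8_y e_8_Y e_5_Y e_13_y e_10_X e_6_Y One_nat_def)
lemma e_9_x: "cent (ew (9, xL))"
  using loop[OF c_xX[of 9], of 0] by (simp add: e_1_x e_1_y e_2_x e_6_X e_7_x e_7_X e_9_X e_10_y e_11_X e_11_y e_12_x e_12_X e_13_x e_12_y e_2_X e_1_X e_12_Y e_1_Y e_3_X e_4_y e_11_Y e_4_Y e_5_x e_6_x e_8_x e_9_y e_10_Y e_9_Y e_10_x e_11_x e_13_X e_14_X e_7_y e_2_y e_3_x e_4_x e_3_y e_3_Y e_2_Y e_4_X e_5_y e_5_X e_8_y e_8_Y e_5_Y e_13_y e_10_X e_6_Y e_7_Y One_nat_def)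
lemma e_14_x: "cent (ew (14, xL))"
  using loop[OF c_x7[of 10], of 4] by (simp add: e_1_x e_1_y e_2_x e_6_X e_7_x e_7_X e_9_X e_10_y e_11_X e_11_y e_12_x e_12_X e_13_x e_12_y e_2_X e_1_X e_12_Y e_1_Y e_3_X e_4_y e_11_Y e_4_Y e_5_x e_6_x e_8_x e_9_y e_10_Y e_9_Y e_10_x e_11_x e_13_X e_14_X e_7_y e_2_y e_3_x e_4_x e_3_y e_3_Y e_2_Y e_4_X e_5_y e_5_X e_8_y e_8_Y e_5_Y e_13_y e_10_X e_6_Y e_7_Y e_9_x One_nat_def)
lemma e_6_y: "cent (ew (6, yL))"
  using loop[OF c_comm4[of 11], of 7] by (simp add: e_1_x e_1_y e_2_x e_6_X e_7_x e_7_X e_9_X e_10_y e_11_X e_11_y e_12_x e_12_X e_13_x e_12_y e_2_X e_1_X e_12_Y e_1_Y e_3_X e_4_y e_11_Y e_4_Y e_5_x e_6_x e_8_x e_9_y e_10_Y e_9_Y e_10_x e_11_x e_13_X e_14_X e_7_y e_2_y e_3_x e_4_x e_3_y e_3_Y e_2_Y e_4_X e_5_y e_5_X e_8_y e_8_Y e_5_Y e_13_y e_10_X e_6_Y e_7_Y e_9_x e_14_x One_nat_def)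
lemma e_14_y: "cent (ew (14, yL))"
  using loop[OF c_xy3[of 13], of 1] by (simp add: e_1_x e_1_y e_2_x e_6_X e_7_x e_7_X e_9_X e_10_y e_11_X e_11_y e_12_x e_12_X e_13_x e_12_y e_2_X e_1_X e_12_Y e_1_Y e_3_X e_4_y e_11_Y e_4_Y e_5_x e_6_x e_8_x e_9_y e_10_Y e_9_Y e_10_x e_11_x e_13_X e_14_X e_7_y e_2_y e_3_x e_4_x e_3_y e_3_Y e_2_Y e_4_X e_5_y e_5_X e_8_y e_8_Y e_5_Y e_13_y e_10_X e_6_Y e_7_Y e_9_x e_14_x e_6_y One_nat_def)
lemma e_13_Y: "cent (ew (13, yI))"
  using loop[OF c_Yy[of 13], of 0] by (simp add: e_1_x e_1_y e_2_x e_6_X e_7_x e_7_X e_9_X e_10_y e_11_X e_11_y e_12_x e_12_X e_13_x e_12_y e_2_X e_1_X e_12_Y e_1_Y e_3_X e_4_y e_11_Y e_4_Y e_5_x e_6_x e_8_x e_9_y e_10_Y e_9_Y e_10_x e_11_x e_13_X e_14_X e_7_y e_2_y e_3_x e_4_x e_3_y e_3_Y e_2_Y e_4_X e_5_y e_5_X e_8_y e_8_Y e_5_Y e_13_y e_10_X e_6_Y e_7_Y e_9_x e_14_x e_6_y e_14_y One_nat_def)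
lemma e_8_X: "cent (ew (8, xI))"
  using loop[OF c_xX[of 14], of 1] by (simp add: e_1_x e_1_y e_2_x e_6_X e_7_x e_7_X e_9_X e_10_y e_11_X e_11_y e_12_x e_12_X e_13_x e_12_y e_2_X e_1_X e_12_Y e_1_Y e_3_X e_4_y e_11_Y e_4_Y e_5_x e_6_x e_8_x e_9_y e_10_Y e_9_Y e_10_x e_11_x e_13_X e_14_X e_7_y e_2_y e_3_x e_4_x e_3_y e_3_Y e_2_Y e_4_X e_5_y e_5_X e_8_y e_8_Y e_5_Y e_13_y e_10_X e_6_Y e_7_Y e_9_x e_14_x e_6_y e_14_y e_13_Y One_nat_def)
lemma e_14_Y: "cent (ew (14, yI))"
  using loop[OF c_yY[of 14], of 1] by (simp add: e_1_x e_1_y e_2_x e_6_X e_7_x e_7_X e_9_X e_10_y e_11_X e_11_y e_12_x e_12_X e_13_x e_12_y e_2_X e_1_X e_12_Y e_1_Y e_3_X e_4_y e_11_Y e_4_Y e_5_x e_6_x e_8_x e_9_y e_10_Y e_9_Y e_10_x e_11_x e_13_X e_14_X e_7_y e_2_y e_3_x e_4_x e_3_y e_3_Y e_2_Y e_4_X e_5_y e_5_X e_8_y e_8_Y e_5_Y e_13_y e_10_X e_6_Y e_7_Y e_9_x e_14_x e_6_y e_14_y e_13_Y e_8_X One_nat_def)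
lemmas all_edges = e_1_x e_1_y e_2_x e_6_X e_7_x e_7_X e_9_X e_10_y e_11_X e_11_y e_12_x e_12_X e_13_x e_12_y e_2_X e_1_X e_12_Y e_1_Y e_3_X e_4_y e_11_Y e_4_Y e_5_x e_6_x e_8_x e_9_y e_10_Y e_9_Y e_10_x e_11_x e_13_X e_14_X e_7_y e_2_y e_3_x e_4_x e_3_y e_3_Y e_2_Y e_4_X e_5_y e_5_X e_8_y e_8_Y e_5_Y e_13_y e_10_X e_6_Y e_7_Y e_9_x e_14_x e_6_y e_14_y e_13_Y e_8_X e_14_Y

lemma ok_all: assumes "j \<in> R14" "fst l \<in> {X,Y}" shows "cent (ew (j,l))"
proof -
  obtain g b where l: "l = (g,b)" by (cases l)
  have g: "g = X \<or> g = Y" using assms(2) l by simp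
  have j: "j = 1 \<or> j = 2 \<or> j = 3 \<or> j = 4 \<or> j = 5 \<or> j = 6 \<or> j = 7 \<or> j = 8 \<or> j = 9 \<or> j = 10 \<or> j = 11 \<or> j = 12 \<or> j = 13 \<or> j = 14"
    using assms(1) by simp
  show ?thesis unfolding l using g j
    by (elim disjE; cases b; simp only: all_edges One_nat_def)
qed

lemma conj_cent: assumes "cent (a @ winv b)" shows "geq (wconj [tL] a) (wconj [tL] b)"
proof -
  have "wconj [tL] a = (winv a @ [tL] @ a) @ []" by (simp add: wconj_def)
  also have "geq ... ((winv a @ [tL] @ a) @ (winv b @ b))" by (rule geq_left[OF geq_sym[OF cancel_l]])
  also have "... = winv a @ ([tL] @ (a @ winv b)) @ b" by simp
  also have "geq ... (winv a @ ((a @ winv b) @ [tL]) @ b)"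
    by (rule geq_mid, rule geq_sym, rule assms[unfolded cent_def])
  also have "... = (winv a @ a) @ winv b @ [tL] @ b" by simp
  also have "geq ... ([] @ winv b @ [tL] @ b)" by (rule geq_right[OF cancel_l])
  finally show ?thesis by (simp add: wconj_def)
qed

lemma Pw: "inN w \<Longrightarrow> geq (wconj [tL] w) (wconj [tL] (h (act 7 w)))"
proof (induction w rule: rev_induct)
  case Nil show ?case by (simp add: h_def hl_def geq_refl)
next
  case (snoc l w)
  have iw: "inN w" and fl: "fst l \<in> {X,Y}" using snoc.prems by auto
  define j where "j = act 7 w"
  have jr: "j \<in> R14" unfolding j_def by (rule act_range[OF iw]) simp
  have "wconj [tL] (w @ [l]) = winv [l] @ wconj [tL] w @ [l]" by (simp add: wconj_def)
  also have "geq ... (winv [l] @ wconj [tL] (h j) @ [l])" unfolding j_def by (rule geq_mid[OF snoc.IH[OF iw]])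
  also have "... = wconj [tL] (h j @ [l])" by (simp add: wconj_def)
  also have "geq ... (wconj [tL] (h (letter_perm l j)))"
  proof (rule conj_cent)
    show "cent ((h j @ [l]) @ winv (h (letter_perm l j)))"
      using ok_all[OF jr fl] by (simp add: ew_def)
  qed
  finally show ?case by (simp add: j_def)
qed

definition Tw :: "nat \<Rightarrow> word" where "Tw j = wconj [tL] (h j)"

lemma h_props: assumes "j \<in> R14" shows "inN (h j) \<and> act 7 (h j) = j"
proof -
  have j: "j = 1 \<or> j = 2 \<or> j = 3 \<or> j = 4 \<or> j = 5 \<or> j = 6 \<or> j = 7 \<or> j = 8 \<or> j = 9 \<or> j = 10 \<or> j = 11 \<or> j = 12 \<or> j = 13 \<or> j = 14"
    using assms by simp
  then show ?thesis by (elim disjE) (simp_all add: h_def hl_def)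
qed

lemma move: assumes "inN n" "j \<in> R14" shows "geq (Tw j @ n) (n @ Tw (act j n))"
proof -
  have hp: "inN (h j)" "act 7 (h j) = j" using h_props[OF assms(2)] by auto
  have "geq (wconj [tL] (h j @ n)) (Tw (act j n))" using Pw[of "h j @ n"] hp assms(1) by (simp add: Tw_def)
  hence a: "geq (n @ wconj [tL] (h j @ n)) (n @ Tw (act j n))" by (rule geq_left)
  have "Tw j @ n = [] @ (Tw j @ n)" by simp
  also have "geq ... ((n @ winv n) @ (Tw j @ n))" by (rule geq_right[OF geq_sym[OF cancel_r]])
  also have "... = n @ wconj [tL] (h j @ n)" by (simp add: wconj_def Tw_def)
  also have "geq ... (n @ Tw (act j n))" by (rule a)
  finally show ?thesis .
qed

definition tws :: "nat list \<Rightarrow> word" where "tws as = concat (map Tw as)"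

lemma tws_Nil: "tws [] = []" by (simp add: tws_def)
lemma tws_Cons: "tws (a # as) = Tw a @ tws as" by (simp add: tws_def)
lemma tws_append: "tws (as @ bs) = tws as @ tws bs" by (simp add: tws_def)

lemma move_many: "set as \<subseteq> R14 \<Longrightarrow> inN n \<Longrightarrow> geq (tws as @ n) (n @ tws (map (\<lambda>a. act a n) as))"
proof (induction as)
  case Nil show ?case by (simp add: tws_Nil geq_refl)
next
  case (Cons a as)
  have ar: "a \<in> R14" and asr: "set as \<subseteq> R14" using Cons.prems(1) by auto
  have "tws (a # as) @ n = Tw a @ (tws as @ n)" by (simp add: tws_Cons)
  also have "geq ... (Tw a @ (n @ tws (map (\<lambda>a. act a n) as)))" by (rule geq_left[OF Cons.IH[OF asr Cons.prems(2)]])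
  also have "... = (Tw a @ n) @ tws (map (\<lambda>a. act a n) as)" by simp
  also have "geq ... ((n @ Tw (act a n)) @ tws (map (\<lambda>a. act a n) as))" by (rule geq_right[OF move[OF Cons.prems(2) ar]])
  finally show ?case by (simp add: tws_Cons)
qed

lemma tt: "geq [tL, tL] []"
  by (rule geq_rel) (simp add: relators_def wpow_def ltr_def numeral_eq_Suc)

lemma Tw_inv: "geq (Tw j @ Tw j) []"
proof -
  have "Tw j @ Tw j = (winv (h j) @ [tL]) @ (h j @ winv (h j)) @ ([tL] @ h j)" by (simp add: Tw_def wconj_def)
  also have "geq ... ((winv (h j) @ [tL]) @ [] @ ([tL] @ h j))" by (rule geq_mid[OF cancel_r])
  also have "... = winv (h j) @ [tL, tL] @ h j" by simp
  also have "geq ... (winv (h j) @ [] @ h j)" by (rule geq_mid[OF tt])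
  also have "geq (winv (h j) @ [] @ h j) []" using cancel_l[of "h j"] by simp
  finally show ?thesis .
qed

lemma tws_rev: "geq (tws r @ tws (rev r)) []"
proof (induction r)
  case Nil show ?case by (simp add: tws_Nil geq_refl)
next
  case (Cons a r)
  have "tws (a # r) @ tws (rev (a # r)) = Tw a @ (tws r @ tws (rev r)) @ Tw a" by (simp add: tws_Cons tws_append tws_Nil)
  also have "geq ... (Tw a @ [] @ Tw a)" by (rule geq_mid[OF Cons.IH])
  also have "geq (Tw a @ [] @ Tw a) []" using Tw_inv[of a] by simp
  finally show ?case .
qed

fun red :: "(word \<times> nat) list \<Rightarrow> word \<times> nat list" where
  "red [] = ([], [])"
| "red ((n, a) # rest) = (case red rest of (m, as) \<Rightarrow> (n @ m, act a m # as))"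

lemma red_lemma: "\<forall>(n,a)\<in>set items. inN n \<and> a \<in> R14 \<Longrightarrow>
   inN (fst (red items)) \<and> set (snd (red items)) \<subseteq> R14 \<and>
   geq (concat (map (\<lambda>(n,a). n @ Tw a) items)) (fst (red items) @ tws (snd (red items)))"
proof (induction items)
  case Nil show ?case by (simp add: tws_Nil geq_refl)
next
  case (Cons it rest)
  obtain n a where it: "it = (n,a)" by (cases it)
  obtain m as where r: "red rest = (m, as)" by (cases "red rest")
  have na: "inN n" "a \<in> R14" using Cons.prems it by auto
  have IH: "inN m" "set as \<subseteq> R14" "geq (concat (map (\<lambda>(n,a). n @ Tw a) rest)) (m @ tws as)"
    using Cons.IH Cons.prems r by auto
  have am: "act a m \<in> R14" by (rule act_range[OF IH(1) na(2)])
  have "concat (map (\<lambda>(n,a). n @ Tw a) (it # rest)) = (n @ Tw a) @ concat (map (\<lambda>(n,a). n @ Tw a) rest)"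
    by (simp add: it)
  also have "geq ... ((n @ Tw a) @ (m @ tws as))" by (rule geq_left[OF IH(3)])
  also have "... = n @ (Tw a @ m) @ tws as" by simp
  also have "geq ... (n @ (m @ Tw (act a m)) @ tws as)" by (rule geq_mid[OF move[OF IH(1) na(2)]])
  also have "... = fst (red (it # rest)) @ tws (snd (red (it # rest)))" by (simp add: it r tws_Cons)
  finally show ?case using na IH am by (simp add: it r)
qed

lemma base_from:
  assumes "geq (concat (map (\<lambda>(n,a). n @ Tw a) items)) []"
    and "\<forall>(n,a)\<in>set items. inN n \<and> a \<in> R14"
    and "red items = (M, TS)"
  shows "geq (tws TS) (winv M)"
proof -
  have g: "geq (M @ tws TS) []"
    using red_lemma[OF assms(2)] assms(3) geq_trans[OF geq_sym assms(1)] by auto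
  have "tws TS = [] @ tws TS" by simp
  also have "geq ... ((winv M @ M) @ tws TS)" by (rule geq_right[OF geq_sym[OF cancel_l]])
  also have "... = winv M @ (M @ tws TS)" by simp
  also have "geq ... (winv M @ [])" by (rule geq_left[OF g])
  finally show ?thesis by simp
qed

lemma conj_rel: assumes "geq (tws ts) m" "inN g" "set ts \<subseteq> R14"
  shows "geq (tws (map (\<lambda>a. act a g) ts)) (winv g @ m @ g)"
proof -
  have "tws (map (\<lambda>a. act a g) ts) = [] @ tws (map (\<lambda>a. act a g) ts)" by simp
  also have "geq ... ((winv g @ g) @ tws (map (\<lambda>a. act a g) ts))" by (rule geq_right[OF geq_sym[OF cancel_l]])
  also have "... = winv g @ (g @ tws (map (\<lambda>a. act a g) ts))" by simp
  also have "geq ... (winv g @ (tws ts @ g))" by (rule geq_left[OF geq_sym[OF move_many[OF assms(3,2)]]])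
  also have "geq ... (winv g @ (m @ g))" by (rule geq_left[OF geq_right[OF assms(1)]])
  finally show ?thesis by simp
qed

definition reach :: "nat list \<Rightarrow> bool" where
  "reach W \<longleftrightarrow> (\<exists>n. inN n \<and> geq (tws [14, 6, 3, 11]) (n @ tws W))"

lemma reach_start: "reach [14, 6, 3, 11]"
  unfolding reach_def by (rule exI[of _ "[]"]) (simp add: geq_refl)

lemma stepR:
  assumes re: "reach W" and rel: "geq (tws TS) m" and ts: "TS = s @ r" and w: "W = A @ s @ B"
    and w2: "W' = map (\<lambda>a. act a m) A @ rev r @ B" and im: "inN m"
    and rts: "set TS \<subseteq> R14" and rw: "set W \<subseteq> R14"
  shows "reach W'"
proof -
  obtain n where n: "inN n" "geq (tws [14, 6, 3, 11]) (n @ tws W)" using re unfolding reach_def by blast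
  have rA: "set A \<subseteq> R14" using rw w by auto
  have "tws s = tws s @ []" by simp
  also have "geq ... (tws s @ (tws r @ tws (rev r)))" by (rule geq_left[OF geq_sym[OF tws_rev]])
  also have "... = tws TS @ tws (rev r)" by (simp add: ts tws_append)
  also have "geq ... (m @ tws (rev r))" by (rule geq_right[OF rel])
  finally have s: "geq (tws s) (m @ tws (rev r))" .
  have "n @ tws W = n @ tws A @ tws s @ tws B" by (simp add: w tws_append)
  also have "geq ... (n @ tws A @ (m @ tws (rev r)) @ tws B)" by (rule geq_left, rule geq_mid[OF s])
  also have "... = n @ (tws A @ m) @ tws (rev r) @ tws B" by simp
  also have "geq ... (n @ (m @ tws (map (\<lambda>a. act a m) A)) @ tws (rev r) @ tws B)"
    by (rule geq_mid[OF move_many[OF rA im]])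
  also have "... = (n @ m) @ tws W'" by (simp add: w2 tws_append)
  finally have fin: "geq (tws [14, 6, 3, 11]) ((n @ m) @ tws W')" using n(2) geq_trans by blast
  show ?thesis unfolding reach_def
    by (rule exI[of _ "n @ m"]) (use n(1) im fin in simp)
qed

lemma R8: "geq (wpow (ltr Y @ wconj (ltr T) (wpow (ltr X) 2)) 5) []" by (rule geq_rel) (simp add: relators_def)
lemma R9: "geq (wpow (ltr X @ ltr Y @ wpow (ltr X) 2 @ wconj (ltr T) (ltr X)) 5) []" by (rule geq_rel) (simp add: relators_def)
lemma R10: "geq (wpow (ltr X @ ltr T) 8) []" by (rule geq_rel) (simp add: relators_def)


lemma base0: "geq (tws [2, 3, 2, 3, 2]) (winv [yL, yL, yL, yL, yL])"
proof (rule base_from[where items="[([yL], 2), ([yL], 2), ([yL], 2), ([yL], 2), ([yL], 2)]"])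
  show "geq (concat (map (\<lambda>(n,a). n @ Tw a) [([yL], 2), ([yL], 2), ([yL], 2), ([yL], 2), ([yL], 2)])) []"
    using R8 by (simp add: Tw_def h_def hl_def wpow_def ltr_def wconj_def numeral_eq_Suc)
  show "\<forall>(n,a)\<in>set [([yL], 2), ([yL], 2), ([yL], 2), ([yL], 2), ([yL], 2)]. inN n \<and> a \<in> R14" by simp
  show "red [([yL], 2), ([yL], 2), ([yL], 2), ([yL], 2), ([yL], 2)] = ([yL, yL, yL, yL, yL], [2, 3, 2, 3, 2])" by simp
qed

lemma base1: "geq (tws [1, 12, 8, 5, 1]) (winv [xL, yL, xL, xL, xL, yL, xL, xL, xL, yL, xL, xL, xL, yL, xL, xL, xL, yL, xL, xL])"
proof (rule base_from[where items="[([xL, yL, xL, xL], 1), ([xL, yL, xL, xL], 1), ([xL, yL, xL, xL], 1), ([xL, yL, xL, xL], 1), ([xL, yL, xL, xL], 1)]"])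
  show "geq (concat (map (\<lambda>(n,a). n @ Tw a) [([xL, yL, xL, xL], 1), ([xL, yL, xL, xL], 1), ([xL, yL, xL, xL], 1), ([xL, yL, xL, xL], 1), ([xL, yL, xL, xL], 1)])) []"
    using R9 by (simp add: Tw_def h_def hl_def wpow_def ltr_def wconj_def numeral_eq_Suc)
  show "\<forall>(n,a)\<in>set [([xL, yL, xL, xL], 1), ([xL, yL, xL, xL], 1), ([xL, yL, xL, xL], 1), ([xL, yL, xL, xL], 1), ([xL, yL, xL, xL], 1)]. inN n \<and> a \<in> R14" by simp
  show "red [([xL, yL, xL, xL], 1), ([xL, yL, xL, xL], 1), ([xL, yL, xL, xL], 1), ([xL, yL, xL, xL], 1), ([xL, yL, xL, xL], 1)] = ([xL, yL, xL, xL, xL, yL, xL, xL, xL, yL, xL, xL, xL, yL, xL, xL, xL, yL, xL, xL], [1, 12, 8, 5, 1])" by simp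
qed

lemma base2: "geq (tws [7, 6, 5, 4, 3, 2, 1, 7]) (winv [xL, xL, xL, xL, xL, xL, xL, xL])"
proof (rule base_from[where items="[([xL], 7), ([xL], 7), ([xL], 7), ([xL], 7), ([xL], 7), ([xL], 7), ([xL], 7), ([xL], 7)]"])
  show "geq (concat (map (\<lambda>(n,a). n @ Tw a) [([xL], 7), ([xL], 7), ([xL], 7), ([xL], 7), ([xL], 7), ([xL], 7), ([xL], 7), ([xL], 7)])) []"
    using R10 by (simp add: Tw_def h_def hl_def wpow_def ltr_def wconj_def numeral_eq_Suc)
  show "\<forall>(n,a)\<in>set [([xL], 7), ([xL], 7), ([xL], 7), ([xL], 7), ([xL], 7), ([xL], 7), ([xL], 7), ([xL], 7)]. inN n \<and> a \<in> R14" by simp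
  show "red [([xL], 7), ([xL], 7), ([xL], 7), ([xL], 7), ([xL], 7), ([xL], 7), ([xL], 7), ([xL], 7)] = ([xL, xL, xL, xL, xL, xL, xL, xL], [7, 6, 5, 4, 3, 2, 1, 7])" by simp
qed

lemma main_reach: "reach [5, 3, 8, 14]"
proof -
  have s0: "reach [14, 6, 3, 11]" by (rule reach_start)
  have s1: "reach [14, 9, 8, 5]"
    by (rule stepR[OF s0 conj_rel[OF base2, of "[xL, xL, yL, xL, xL, xL, yL, xL]"], where s="[14, 6, 3, 11]" and r="[5, 8, 9, 14]" and A="[]" and B="[]"]) (simp_all add: winv_Cons)
  have s2: "reach [14, 2, 14, 2, 9, 8, 5]"
    by (rule stepR[OF s1 conj_rel[OF base0, of "[yL, xI, xI, yL, xL, xL]"], where s="[14]" and r="[2, 14, 2, 14]" and A="[]" and B="[9, 8, 5]"]) (simp_all add: winv_Cons)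
  have s3: "reach [4, 1, 4, 1, 9, 8, 9, 5]"
    by (rule stepR[OF s2 conj_rel[OF base0, of "[xL, yL, xL, xL, xL, yL, xL]"], where s="[9, 8]" and r="[9, 8, 9]" and A="[14, 2, 14, 2]" and B="[5]"]) (simp_all add: winv_Cons)
  have s4: "reach [12, 9, 12, 1, 2, 9, 5]"
    by (rule stepR[OF s3 conj_rel[OF base1, of "[yL, xI, xI, xI, yL, xL, xL, yL]"], where s="[1, 9, 8]" and r="[2, 1]" and A="[4, 1, 4]" and B="[9, 5]"]) (simp_all add: winv_Cons)
  have s5: "reach [2, 5, 2, 8, 12, 9, 5, 9]"
    by (rule stepR[OF s4 conj_rel[OF base0, of "[xL, xL, xL, yL, xL, xL, yL]"], where s="[9, 5]" and r="[9, 5, 9]" and A="[12, 9, 12, 1, 2]" and B="[]"]) (simp_all add: winv_Cons)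
  have s6: "reach [12, 2, 12, 7, 12, 2, 9]"
    by (rule stepR[OF s5 conj_rel[OF base1, of "[yL, xI, xI, yL, xL, xL, xL]"], where s="[12, 9, 5]" and r="[2, 12]" and A="[2, 5, 2, 8]" and B="[9]"]) (simp_all add: winv_Cons)
  have s7: "reach [12, 9, 5, 12, 7, 12, 2, 9]"
    by (rule stepR[OF s6 conj_rel[OF base1, of "[xL, yL, xL, xL, xL, yL, xI]"], where s="[12, 2]" and r="[5, 9, 12]" and A="[]" and B="[12, 7, 12, 2, 9]"]) (simp_all add: winv_Cons)
  have s8: "reach [7, 13, 14, 12, 7, 2, 9]"
    by (rule stepR[OF s7 conj_rel[OF base0, of "[yL, xI, xI, yL]"], where s="[12, 7, 12]" and r="[7, 12]" and A="[12, 9, 5]" and B="[2, 9]"]) (simp_all add: winv_Cons)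
  have s9: "reach [5, 3, 14, 5, 2, 9]"
    by (rule stepR[OF s8 conj_rel[OF base1, of "[xL, xL, xL, yL, xL, xL, xL, yL]"], where s="[14, 12, 7]" and r="[5, 14]" and A="[7, 13]" and B="[2, 9]"]) (simp_all add: winv_Cons)
  have s10: "reach [2, 6, 3, 5, 9, 12, 9]"
    by (rule stepR[OF s9 conj_rel[OF base1, of "[xI, yL, xI, xI]"], where s="[5, 2]" and r="[12, 9, 5]" and A="[5, 3, 14]" and B="[9]"]) (simp_all add: winv_Cons)
  have s11: "reach [7, 13, 3, 12, 10, 9, 12, 9]"
    by (rule stepR[OF s10 conj_rel[OF base1, of "[xL, yL, xI, xI, xI, yL, xL, xL, xL]"], where s="[3, 5]" and r="[10, 12, 3]" and A="[2, 6]" and B="[9, 12, 9]"]) (simp_all add: winv_Cons)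
  have s12: "reach [14, 6, 8, 9, 1, 9, 12]"
    by (rule stepR[OF s11 conj_rel[OF base0, of "[xI, yL, xI, xI, yL]"], where s="[9, 12, 9]" and r="[12, 9]" and A="[7, 13, 3, 12, 10]" and B="[]"]) (simp_all add: winv_Cons)
  have s13: "reach [7, 6, 2, 9, 1, 12]"
    by (rule stepR[OF s12 conj_rel[OF base0, of "[xL, yL, xI, xI, xI, yL, xL, xL, xL]"], where s="[9, 1, 9]" and r="[1, 9]" and A="[14, 6, 8]" and B="[12]"]) (simp_all add: winv_Cons)
  have s14: "reach [14, 10, 6, 13, 1, 5, 8]"
    by (rule stepR[OF s13 conj_rel[OF base1, of "[]"], where s="[1, 12]" and r="[8, 5, 1]" and A="[7, 6, 2, 9]" and B="[]"]) (simp_all add: winv_Cons)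
  have s15: "reach [10, 14, 8, 13, 1, 13, 5, 8]"
    by (rule stepR[OF s14 conj_rel[OF base0, of "[yL, xI, xI, yL, xL]"], where s="[13, 1]" and r="[13, 1, 13]" and A="[14, 10, 6]" and B="[5, 8]"]) (simp_all add: winv_Cons)
  have s16: "reach [12, 4, 8, 6, 13, 5, 8]"
    by (rule stepR[OF s15 conj_rel[OF base1, of "[yL, xI, xI, xI, yL, xI, xI]"], where s="[8, 13, 1]" and r="[6, 8]" and A="[10, 14]" and B="[13, 5, 8]"]) (simp_all add: winv_Cons)
  have s17: "reach [6, 11, 1, 12, 13, 5, 13, 8]"
    by (rule stepR[OF s16 conj_rel[OF base0, of "[xL, yL, xI, xI, xI, yL]"], where s="[13, 5]" and r="[13, 5, 13]" and A="[12, 4, 8, 6]" and B="[8]"]) (simp_all add: winv_Cons)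
  have s18: "reach [12, 2, 7, 12, 6, 13, 8]"
    by (rule stepR[OF s17 conj_rel[OF base1, of "[xI, yL, xI, xI, xI, yL, xL]"], where s="[12, 13, 5]" and r="[6, 12]" and A="[6, 11, 1]" and B="[13, 8]"]) (simp_all add: winv_Cons)
  have s19: "reach [12, 2, 12, 7, 12, 6, 13, 8]"
    by (rule stepR[OF s18 conj_rel[OF base0, of "[xI, yL, xI, xI, xI, yL, xL, xL]"], where s="[12, 2]" and r="[12, 2, 12]" and A="[]" and B="[7, 12, 6, 13, 8]"]) (simp_all add: winv_Cons)
  have s20: "reach [7, 6, 12, 7, 6, 13, 8]"
    by (rule stepR[OF s19 conj_rel[OF base0, of "[yL, xI, xI, yL]"], where s="[12, 7, 12]" and r="[7, 12]" and A="[12, 2]" and B="[6, 13, 8]"]) (simp_all add: winv_Cons)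
  have s21: "reach [4, 6, 5, 13, 7, 6, 13, 8]"
    by (rule stepR[OF s20 conj_rel[OF base1, of "[yL, xL, xL, xL, yL, xL]"], where s="[6, 12]" and r="[13, 5, 6]" and A="[7]" and B="[7, 6, 13, 8]"]) (simp_all add: winv_Cons)
  have s22: "reach [11, 14, 1, 13, 14, 13, 8]"
    by (rule stepR[OF s21 conj_rel[OF base1, of "[xL, xL, xL, yL, xL, xL]"], where s="[13, 7, 6]" and r="[14, 13]" and A="[4, 6, 5]" and B="[13, 8]"]) (simp_all add: winv_Cons)
  have s23: "reach [9, 14, 1, 14, 13, 14, 13, 8]"
    by (rule stepR[OF s22 conj_rel[OF base0, of "[xI, xI, xI, yL, xL]"], where s="[14, 1]" and r="[14, 1, 14]" and A="[11]" and B="[13, 14, 13, 8]"]) (simp_all add: winv_Cons)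
  have s24: "reach [5, 13, 8, 14, 8]"
    by (rule stepR[OF s23 conj_rel[OF base0, of "[xL, yL, xL, xL, xL, yL, xI]"], where s="[14, 13, 14, 13]" and r="[14]" and A="[9, 14, 1]" and B="[8]"]) (simp_all add: winv_Cons)
  have s25: "reach [5, 3, 8, 14]"
    by (rule stepR[OF s24 conj_rel[OF base0, of "[xL, yL, xL, xL, xL, yL]"], where s="[8, 14, 8]" and r="[14, 8]" and A="[5, 13]" and B="[]"]) (simp_all add: winv_Cons)
  then show ?thesis .
qed

lemma tw_eq: assumes "i \<in> R14" shows "geq (tw i) (Tw i)"
proof -
  let ?P = "\<lambda>g. inN g \<and> act 7 g = i"
  have ex: "\<exists>g. ?P g" using h_props[OF assms] by blast
  have p: "?P (SOME g. ?P g)" by (rule someI_ex[OF ex])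
  show ?thesis unfolding tw_def Tw_def ltr_def using Pw[of "SOME g. ?P g"] p by simp
qed

theorem lemma3p7:
  shows "\<exists>\<sigma>. inN \<sigma> \<and> geq (tw 14 @ tw 6 @ tw 3 @ tw 11) (\<sigma> @ tw 5 @ tw 3 @ tw 8 @ tw 14)"
proof -
  obtain n where n: "inN n" "geq (tws [14, 6, 3, 11]) (n @ tws [5, 3, 8, 14])"
    using main_reach unfolding reach_def by blast
  have e14: "geq (tw 14) (Tw 14)" by (rule tw_eq) simp
  have e6: "geq (tw 6) (Tw 6)" by (rule tw_eq) simp
  have e3: "geq (tw 3) (Tw 3)" by (rule tw_eq) simp
  have e11: "geq (tw 11) (Tw 11)" by (rule tw_eq) simp
  have e5: "geq (tw 5) (Tw 5)" by (rule tw_eq) simp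
  have e8: "geq (tw 8) (Tw 8)" by (rule tw_eq) simp
  have L: "geq (tw 14 @ tw 6 @ tw 3 @ tw 11) (tws [14, 6, 3, 11])"
    unfolding tws_def using geq_app[OF e14 geq_app[OF e6 geq_app[OF e3 geq_app[OF e11 geq_refl[of "[]"]]]]] by simp
  have R0: "geq (tw 5 @ tw 3 @ tw 8 @ tw 14) (tws [5, 3, 8, 14])"
    unfolding tws_def using geq_app[OF e5 geq_app[OF e3 geq_app[OF e8 geq_app[OF e14 geq_refl[of "[]"]]]]] by simp
  have R: "geq (n @ tws [5, 3, 8, 14]) (n @ tw 5 @ tw 3 @ tw 8 @ tw 14)"
    by (rule geq_left[OF geq_sym[OF R0]])
  show ?thesis using n(1) geq_trans[OF geq_trans[OF L n(2)] R] by blast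
qed

end
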